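(* Let $s_0>1$, $\alpha\in(0,1/2)$, $h$ and $\widehat\psi$, $A$ be as in the context. For $\zeta\in\mathbb R$ and $x\in[-(2A)^{-1},(2A)^{-1}]$ define \[ \mathcal I_\zeta(x):=\int_{\mathbb R}e^{i\zeta\eta}\frac{|\widehat\psi(\eta)|^2\,h(x\eta)}{(s_0^2-x^2\eta^2)^{2\alpha}}\,d\eta . \] Then for each $\zeta$, $\mathcal I_\zeta$ is four times continuously differentiable on $[-(2A)^{-1},(2A)^{-1}]$, and there is a finite constant $c_1>0$, not depending on $\zeta$ and $x$, such that for all $\zeta\in\mathbb R$ and all $|x|\le(2A)^{-1}$, \[ \Big|\mathcal I_\zeta(x)-s_0^{-4\alpha}\int_{\mathbb R}e^{i\zeta\eta}|\widehat\psi(\eta)|^2d\eta-2\alpha s_0^{-4\alpha-2}\Big(\int_{\mathbb R}e^{i\zeta\eta}\eta^2|\widehat\psi(\eta)|^2d\eta\Big)x^2\Big|\le c_1x^4 . \]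
   Context: $s_0>1$, $\alpha\in(0,1/2)$, and $h$ is an even, non-negative, bounded, four times continuously differentiable function on $\mathbb R$ with $h^{(i)}(0)=0$ for $i=1,2,3,4$, $h(0)=1$, $h>0$ in some neighbourhood of $\pm s_0$, and $\int_{\mathbb R}h(\lambda)(1+|\lambda|)^{-\varepsilon}d\lambda<\infty$ for every $\varepsilon>0$. $\psi\in L_1(\mathbb R)$ is real-valued with Fourier transform $\widehat\psi(\lambda)=\int_{\mathbb R}e^{-i\lambda t}\psi(t)\,dt$ satisfying $\mathrm{supp}\,\widehat\psi\subset[-A,A]$ for some $A>0$, and $\widehat\psi$ is of bounded variation on $[-A,A]$. *)

theory Defs
  imports "HOL-Analysis.Analysis"
begin

definition fourier :: "(real \<Rightarrow> real) \<Rightarrow> real \<Rightarrow> complex" where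
  "fourier \<psi> l = (LINT t|lborel. exp (- \<i> * complex_of_real (l * t)) * complex_of_real (\<psi> t))"

definition bounded_variation_on :: "(real \<Rightarrow> 'a::real_normed_vector) \<Rightarrow> real \<Rightarrow> real \<Rightarrow> bool" where
  "bounded_variation_on f a b \<longleftrightarrow>
     (\<exists>M. \<forall>(n::nat) (t::nat \<Rightarrow> real).
        (\<forall>i\<le>n. t i \<in> {a..b}) \<and> (\<forall>i<n. t i \<le> t (Suc i)) \<longrightarrow>
        (\<Sum>i<n. norm (f (t (Suc i)) - f (t i))) \<le> M)"

definition Cn_on :: "nat \<Rightarrow> real set \<Rightarrow> (real \<Rightarrow> 'a::real_normed_vector) \<Rightarrow> bool" where
  "Cn_on n S f \<longleftrightarrow>
     (\<exists>D::nat \<Rightarrow> real \<Rightarrow> 'a. (\<forall>x\<in>S. D 0 x = f x) \<and>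
        (\<forall>k<n. \<forall>x\<in>S. (D k has_vector_derivative D (Suc k) x) (at x within S)) \<and>
        continuous_on S (D n))"

end

theory Submission
  imports Defs
begin

fun Ck :: "nat \<Rightarrow> real set \<Rightarrow> (real \<Rightarrow> real) \<Rightarrow> bool" where
  "Ck 0 T f = continuous_on T f"
| "Ck (Suc n) T f = (\<exists>f'. (\<forall>x\<in>T. (f has_real_derivative f' x) (at x)) \<and> Ck n T f')"

declare Ck.simps[simp del]

lemma Ck0: "Ck 0 T f = continuous_on T f" by (simp add: Ck.simps)

lemma CkSucI: "(\<And>x. x\<in>T \<Longrightarrow> (f has_real_derivative f' x) (at x)) \<Longrightarrow> Ck n T f' \<Longrightarrow> Ck (Suc n) T f"
  unfolding Ck.simps(2) by blast

lemma CkSucE: "Ck (Suc n) T f \<Longrightarrow> (\<And>f'. (\<forall>x\<in>T. (f has_real_derivative f' x) (at x)) \<Longrightarrow> Ck n T f' \<Longrightarrow> P) \<Longrightarrow> P"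
  unfolding Ck.simps(2) by blast

lemma Ck_cont: "Ck n T f \<Longrightarrow> continuous_on T f"
proof (cases n)
  case 0
  assume "Ck n T f" then show ?thesis using 0 by (simp add: Ck0)
next
  case (Suc m)
  assume "Ck n T f"
  then obtain f' where "\<forall>x\<in>T. (f has_real_derivative f' x) (at x)" using Suc by (auto elim: CkSucE)
  then show ?thesis by (meson DERIV_isCont continuous_at_imp_continuous_on)
qed

lemma Ck_Suc_le: "Ck (Suc n) T f \<Longrightarrow> Ck n T f"
proof (induction n arbitrary: f)
  case 0
  then show ?case using Ck_cont[OF 0] by (simp add: Ck0)
next
  case (Suc n)
  from Suc.prems obtain f' where f: "\<forall>x\<in>T. (f has_real_derivative f' x) (at x)" "Ck (Suc n) T f'"
    by (rule CkSucE)
  from Suc.IH[OF f(2)] have "Ck n T f'" .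
  then show ?case using f(1) by (intro CkSucI) auto
qed

lemma Ck_add: "Ck n T f \<Longrightarrow> Ck n T g \<Longrightarrow> Ck n T (\<lambda>x. f x + g x)"
proof (induction n arbitrary: f g)
  case 0
  then show ?case by (auto simp: Ck0 intro: continuous_on_add)
next
  case (Suc n)
  obtain f' where f: "\<forall>x\<in>T. (f has_real_derivative f' x) (at x)" "Ck n T f'" using Suc.prems(1) by (rule CkSucE)
  obtain g' where g: "\<forall>x\<in>T. (g has_real_derivative g' x) (at x)" "Ck n T g'" using Suc.prems(2) by (rule CkSucE)
  show ?case
    by (rule CkSucI[OF _ Suc.IH[OF f(2) g(2)]]) (use f g in \<open>auto intro!: DERIV_add\<close>)
qed

lemma Ck_const: "Ck n T (\<lambda>x. c)"
proof (induction n arbitrary: c)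
  case 0 then show ?case by (simp add: Ck0)
next
  case (Suc n) then show ?case by (intro CkSucI[of _ _ "\<lambda>x. 0"]) auto
qed

lemma Ck_lin: "Ck n T (\<lambda>x. c * x)"
proof (cases n)
  case 0 then show ?thesis by (auto simp: Ck0 intro: continuous_intros)
next
  case (Suc m) then show ?thesis
    by (auto intro!: CkSucI[of _ _ "\<lambda>x. c"] Ck_const derivative_eq_intros)
qed

lemma Ck_mult: "Ck n T f \<Longrightarrow> Ck n T g \<Longrightarrow> Ck n T (\<lambda>x. f x * g x)"
proof (induction n arbitrary: f g)
  case 0
  then show ?case by (auto simp: Ck0 intro: continuous_on_mult)
next
  case (Suc n)
  obtain f' where f: "\<forall>x\<in>T. (f has_real_derivative f' x) (at x)" "Ck n T f'" using Suc.prems(1) by (rule CkSucE)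
  obtain g' where g: "\<forall>x\<in>T. (g has_real_derivative g' x) (at x)" "Ck n T g'" using Suc.prems(2) by (rule CkSucE)
  have f0: "Ck n T f" using Ck_Suc_le Suc.prems(1) by blast
  have g0: "Ck n T g" using Ck_Suc_le Suc.prems(2) by blast
  have "Ck n T (\<lambda>x. f' x * g x + g' x * f x)"
    by (rule Ck_add[OF Suc.IH[OF f(2) g0] Suc.IH[OF g(2) f0]])
  then show ?case
    by (rule CkSucI[rotated]) (use f g in \<open>blast intro: DERIV_mult\<close>)
qed

lemma Ck_subset: "Ck n T f \<Longrightarrow> S \<subseteq> T \<Longrightarrow> Ck n S f"
proof (induction n arbitrary: f)
  case 0 then show ?case by (auto simp: Ck0 intro: continuous_on_subset)
next
  case (Suc n)
  obtain f' where f: "\<forall>x\<in>T. (f has_real_derivative f' x) (at x)" "Ck n T f'" using Suc.prems(1) by (rule CkSucE)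
  show ?case by (rule CkSucI[OF _ Suc.IH[OF f(2) Suc.prems(2)]]) (use f Suc.prems(2) in auto)
qed

lemma Ck_family:
  "Ck n T f \<Longrightarrow> \<exists>D. D 0 = f \<and> (\<forall>k<n. \<forall>x\<in>T. (D k has_real_derivative D (Suc k) x) (at x))
     \<and> (\<forall>k\<le>n. continuous_on T (D k))"
proof (induction n arbitrary: f)
  case 0 then show ?case by (auto simp: Ck0 intro!: exI[of _ "\<lambda>_. f"])
next
  case (Suc n)
  obtain f' where f: "\<forall>x\<in>T. (f has_real_derivative f' x) (at x)" "Ck n T f'" using Suc.prems(1) by (rule CkSucE)
  obtain D' where D': "D' 0 = f'" "\<forall>k<n. \<forall>x\<in>T. (D' k has_real_derivative D' (Suc k) x) (at x)"
     "\<forall>k\<le>n. continuous_on T (D' k)" using Suc.IH[OF f(2)] by blast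
  define D where "D = (\<lambda>k. case k of 0 \<Rightarrow> f | Suc j \<Rightarrow> D' j)"
  have "\<forall>k<Suc n. \<forall>x\<in>T. (D k has_real_derivative D (Suc k) x) (at x)"
  proof (intro allI impI ballI)
    fix k x assume "k < Suc n" "x \<in> T"
    then show "(D k has_real_derivative D (Suc k) x) (at x)"
      using D' f by (cases k) (auto simp: D_def)
  qed
  moreover have "\<forall>k\<le>Suc n. continuous_on T (D k)"
  proof (intro allI impI)
    fix k assume "k \<le> Suc n"
    then show "continuous_on T (D k)"
      using D' Ck_cont[OF Suc.prems] by (cases k) (auto simp: D_def)
  qed
  ultimately show ?case by (intro exI[of _ D]) (auto simp: D_def)
qed

lemma Ck_Q:
  fixes s0 :: real
  assumes "s0 > 0"
  shows "Ck n {-s0<..<s0} (\<lambda>u. (s0\<^sup>2 - u\<^sup>2) powr \<beta>)"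
proof -
  have pos: "s0\<^sup>2 - u\<^sup>2 > 0" if "u \<in> {-s0<..<s0}" for u
  proof -
    have "\<bar>u\<bar> < s0" using that by auto
    then have "u\<^sup>2 < s0\<^sup>2" by (metis abs_ge_zero abs_power2 power2_abs power_strict_mono zero_less_numeral)
    then show ?thesis by simp
  qed
  show ?thesis
  proof (induction n arbitrary: \<beta>)
    case 0
    have "continuous_on {-s0<..<s0} (\<lambda>u. (s0\<^sup>2 - u\<^sup>2) powr \<beta>)"
    proof -
      have "\<forall>x\<in>{-s0<..<s0}. s0\<^sup>2 - x\<^sup>2 \<noteq> 0" using pos by (metis less_irrefl)
      then show ?thesis by (intro continuous_on_powr continuous_intros)
    qed
    then show ?case by (simp add: Ck0)
  next
    case (Suc n)
    have A: "Ck n {-s0<..<s0} (\<lambda>u. (s0\<^sup>2 - u\<^sup>2) powr (\<beta> - 1) * ((-2*\<beta>) * u))"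
      by (intro Ck_mult Suc.IH Ck_lin)
    have B: "((\<lambda>u. (s0\<^sup>2 - u\<^sup>2) powr \<beta>) has_real_derivative (s0\<^sup>2 - x\<^sup>2) powr (\<beta> - 1) * ((-2*\<beta>) * x)) (at x)"
      if "x \<in> {-s0<..<s0}" for x
    proof -
      have d: "((\<lambda>u. s0\<^sup>2 - u\<^sup>2) has_real_derivative (0 - 2 * x)) (at x)"
        by (intro DERIV_diff DERIV_const) (use DERIV_pow[of 2 x] in simp)
      show ?thesis
        by (rule DERIV_cong[OF DERIV_fun_powr[OF d pos[OF that], of \<beta>]]) (simp add: mult_ac)
    qed
    show ?case by (rule CkSucI[OF B A])
  qed
qed

lemma h_Ck:
  fixes h :: "real \<Rightarrow> real"
  assumes h_diff: "\<And>k x. k < 4 \<Longrightarrow> (deriv ^^ k) h differentiable (at x)"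
    and h_cont4: "continuous_on UNIV ((deriv ^^ 4) h)"
  shows "Ck 4 UNIV h"
proof -
  have "j \<le> 4 \<Longrightarrow> Ck j UNIV ((deriv^^(4-j)) h)" for j
  proof (induction j)
    case 0 then show ?case using h_cont4 by (simp add: Ck0)
  next
    case (Suc j)
    define k where "k = 3 - j"
    have k4: "k < 4" and kj: "4 - Suc j = k" and kj': "4 - j = Suc k" using Suc.prems by (auto simp: k_def)
    have "((deriv^^k) h has_real_derivative (deriv^^(Suc k)) h x) (at x)" for x
      using h_diff[OF k4, of x] by (simp add: DERIV_deriv_iff_real_differentiable)
    moreover have "Ck j UNIV ((deriv^^(Suc k)) h)" using Suc kj' by simp
    ultimately have "Ck (Suc j) UNIV ((deriv^^k) h)" by (intro CkSucI)
    then show ?case using kj by simp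
  qed
  from this[of 4] show ?thesis by simp
qed

lemma fourier_cont:
  assumes "integrable lborel \<psi>"
  shows "continuous_on UNIV (fourier \<psi>)"
proof -
  have m: "\<psi> \<in> borel_measurable borel" using assms by auto
  have mm: "(\<lambda>x. exp (- \<i> * complex_of_real (c * x)) * complex_of_real (\<psi> x)) \<in> borel_measurable lborel" for c
  proof -
    have "(\<lambda>x. exp (- \<i> * complex_of_real (c * x))) \<in> borel_measurable borel"
      by (intro borel_measurable_continuous_onI continuous_intros)
    moreover have "(\<lambda>x. complex_of_real (\<psi> x)) \<in> borel_measurable borel"
      using measurable_compose[OF m borel_measurable_of_real] by (simp add: comp_def)
    ultimately show ?thesis by (simp add: borel_measurable_times)
  qed
  have "isCont (fourier \<psi>) l" for l
    unfolding continuous_at_sequentially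
  proof safe
    fix X assume X: "X \<longlonglongrightarrow> l"
    show "(fourier \<psi> \<circ> X) \<longlonglongrightarrow> fourier \<psi> l"
      unfolding comp_def fourier_def
    proof (rule integral_dominated_convergence[where w="\<lambda>t. \<bar>\<psi> t\<bar>"])
      show "integrable lborel (\<lambda>t. \<bar>\<psi> t\<bar>)" using assms by auto
      have "(\<lambda>i. exp (- \<i> * complex_of_real (X i * x)) * complex_of_real (\<psi> x))
          \<longlonglongrightarrow> exp (- \<i> * complex_of_real (l * x)) * complex_of_real (\<psi> x)" for x
        by (intro tendsto_mult tendsto_const tendsto_exp tendsto_of_real tendsto_mult_left X)
      then show "AE x in lborel. (\<lambda>i. exp (- \<i> * complex_of_real (X i * x)) * complex_of_real (\<psi> x))
          \<longlonglongrightarrow> exp (- \<i> * complex_of_real (l * x)) * complex_of_real (\<psi> x)"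
        by simp
      have "norm (exp (- \<i> * complex_of_real (X i * x)) * complex_of_real (\<psi> x)) \<le> \<bar>\<psi> x\<bar>" for i x
      proof -
        have "exp (- \<i> * complex_of_real (X i * x)) = exp (\<i> * complex_of_real (- (X i * x)))" by simp
        then show ?thesis by (simp only: norm_mult norm_exp_i_times norm_of_real)
      qed
      then show "\<And>i. AE x in lborel. norm (exp (- \<i> * complex_of_real (X i * x)) * complex_of_real (\<psi> x)) \<le> \<bar>\<psi> x\<bar>"
        by simp
      show "(\<lambda>x. exp (- \<i> * complex_of_real (l * x)) * complex_of_real (\<psi> x)) \<in> borel_measurable lborel"
        by (rule mm)
      show "\<And>i. (\<lambda>x. exp (- \<i> * complex_of_real (X i * x)) * complex_of_real (\<psi> x)) \<in> borel_measurable lborel"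
        by (rule mm)
    qed
  qed
  then show ?thesis by (simp add: continuous_at_imp_continuous_on)
qed

lemma lint_cbox:
  fixes f :: "real \<Rightarrow> complex"
  assumes "continuous_on {a..b} f" "\<And>t. t \<notin> {a..b} \<Longrightarrow> f t = 0"
  shows "integrable lborel f" "(LINT t|lborel. f t) = integral {a..b} f"
proof -
  have eq: "indicator {a..b} x *\<^sub>R f x = f x" for x
    by (cases "x \<in> {a..b}") (simp_all add: assms(2))
  have "integrable lborel (\<lambda>x. indicator {a..b} x *\<^sub>R f x)"
    by (intro borel_integrable_compact compact_Icc assms(1))
  then show "integrable lborel f" by (simp only: eq)
  have "(LINT t|lborel. f t) = (LINT x : {a..b} | lborel. f x)"
    unfolding set_lebesgue_integral_def
    by (simp only: eq)
  also have "\<dots> = integral {a..b} f"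
    by (intro set_borel_integral_eq_integral borel_integrable_atLeastAtMost' assms(1))
  finally show "(LINT t|lborel. f t) = integral {a..b} f" .
qed

lemma cont_bound:
  fixes f :: "real \<Rightarrow> real"
  assumes "continuous_on {a..b} f"
  shows "\<exists>B\<ge>0. \<forall>x\<in>{a..b}. \<bar>f x\<bar> \<le> B"
proof -
  have "bounded (f ` {a..b})" by (intro compact_imp_bounded compact_continuous_image assms compact_Icc)
  then obtain B where "\<forall>y\<in>f ` {a..b}. norm y \<le> B" by (auto simp: bounded_iff)
  then show ?thesis by (intro exI[of _ "max B 0"]) force
qed

lemma sq_powr: "(s::real) > 0 \<Longrightarrow> (s\<^sup>2) powr b = s powr (2 * b)"
  by (simp add: powr_def ln_realpow)

lemma h_taylor:
  fixes h :: "real \<Rightarrow> real"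
  assumes h_diff: "\<And>k x. k < 4 \<Longrightarrow> (deriv ^^ k) h differentiable (at x)"
    and h_cont4: "continuous_on UNIV ((deriv ^^ 4) h)"
    and h_deriv0: "\<And>i. i \<in> {1..4} \<Longrightarrow> (deriv ^^ i) h 0 = 0"
    and h_at0: "h 0 = 1"
  shows "\<exists>M\<ge>0. \<forall>u. \<bar>u\<bar> \<le> 1/2 \<longrightarrow> \<bar>h u - 1\<bar> \<le> M * u^4"
proof -
  obtain M where M: "M \<ge> 0" "\<forall>x\<in>{-1/2..1/2}. \<bar>(deriv ^^ 4) h x\<bar> \<le> M"
    using cont_bound[OF continuous_on_subset[OF h_cont4]] by blast
  have D: "\<forall>m t. m < 4 \<and> -1/2 \<le> t \<and> t \<le> 1/2 \<longrightarrow>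
      DERIV ((deriv ^^ m) h) t :> (deriv ^^ (Suc m)) h t"
    using h_diff by (simp add: DERIV_deriv_iff_real_differentiable)
  have "\<bar>h u - 1\<bar> \<le> M * u^4" if u: "\<bar>u\<bar> \<le> 1/2" for u
  proof (cases "u = 0")
    case True then show ?thesis using h_at0 by simp
  next
    case False
    have "\<exists>t. (if u < 0 then u < t \<and> t < 0 else 0 < t \<and> t < u) \<and>
      h u = (\<Sum>m<4. ((deriv ^^ m) h 0 / fact m) * (u - 0)^m) + ((deriv ^^ 4) h t / fact 4) * (u - 0)^4"
      by (rule Taylor[of 4 "\<lambda>m. (deriv ^^ m) h" h "-1/2" "1/2" 0 u, OF _ _ D]) (use u False in auto)
    then obtain t where t: "(if u < 0 then u < t \<and> t < 0 else 0 < t \<and> t < u)"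
      "h u = (\<Sum>m<4. ((deriv ^^ m) h 0 / fact m) * (u - 0)^m) + ((deriv ^^ 4) h t / fact 4) * (u - 0)^4"
      by blast
    have t2: "t \<in> {-1/2..1/2}" using t(1) u by (auto split: if_splits)
    have s: "(\<Sum>m<4. ((deriv ^^ m) h 0 / fact m) * (u - 0)^m) = 1"
      using h_deriv0[of 1] h_deriv0[of 2] h_deriv0[of 3] h_at0
      by (simp add: eval_nat_numeral)
    have "\<bar>h u - 1\<bar> = \<bar>(deriv ^^ 4) h t\<bar> / 24 * u^4"
      using t(2) s by (simp add: abs_mult eval_nat_numeral)
    also have "\<dots> \<le> M / 24 * u^4" using M t2 by (intro mult_right_mono divide_right_mono) auto
    also have "\<dots> \<le> M * u^4" using M by (intro mult_right_mono) auto
    finally show ?thesis .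
  qed
  then show ?thesis using M by blast
qed

lemma Q_taylor:
  fixes s0 \<alpha> :: real
  assumes s0: "s0 > 1"
  shows "\<exists>N\<ge>0. \<forall>u. \<bar>u\<bar> \<le> 1/2 \<longrightarrow>
     \<bar>(s0\<^sup>2 - u\<^sup>2) powr (-2*\<alpha>) - s0 powr (-4*\<alpha>) - 2*\<alpha> * s0 powr (-4*\<alpha>-2) * u\<^sup>2\<bar> \<le> N * u^4"
proof -
  define \<beta> where "\<beta> = -2*\<alpha>"
  define d where "d = (\<lambda>m (v::real). if m = 0 then (s0\<^sup>2-v) powr \<beta> else if m = (1::nat) then -\<beta> * (s0\<^sup>2-v) powr (\<beta>-1)
      else \<beta>*(\<beta>-1)*(s0\<^sup>2-v) powr (\<beta>-2))"
  have s1: "s0\<^sup>2 > 1" using s0 by (metis less_1_mult power2_eq_square)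
  have pos: "s0\<^sup>2 - t > 0" if "t \<le> 1/4" for t :: real using s1 that by linarith
  have gd: "((\<lambda>v. s0\<^sup>2 - v) has_real_derivative -1) (at t)" for t
    by (auto intro!: derivative_eq_intros)
  have D: "\<forall>m (t::real). m < 2 \<and> 0 \<le> t \<and> t \<le> 1/4 \<longrightarrow> DERIV (d m) t :> d (Suc m) t"
  proof (intro allI impI)
    fix m :: nat and t :: real assume mt: "m < 2 \<and> 0 \<le> t \<and> t \<le> 1/4"
    then have p: "s0\<^sup>2 - t > 0" using pos by auto
    show "DERIV (d m) t :> d (Suc m) t"
    proof (cases "m = 0")
      case True
      show ?thesis using DERIV_fun_powr[OF gd p, of \<beta>] True by (simp add: d_def)
    next
      case False
      then have m1: "m = 1" using mt by auto
      have "DERIV (\<lambda>v. -\<beta> * (s0\<^sup>2-v) powr (\<beta>-1)) t :> -\<beta> * ((\<beta>-1) * (s0\<^sup>2-t) powr (\<beta>-1-1) * -1)"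
        by (intro DERIV_cmult) (use DERIV_fun_powr[OF gd p, of "\<beta>-1"] in simp)
      then show ?thesis using m1 by (simp add: d_def algebra_simps)
    qed
  qed
  have c2: "continuous_on {0..1/4} (d 2)"
  proof -
    have nz: "\<forall>x\<in>{0..1/4}. s0\<^sup>2 - x \<noteq> 0"
    proof
      fix x :: real assume "x \<in> {0..1/4}"
      then have "x \<le> 1/4" by simp
      from pos[OF this] show "s0\<^sup>2 - x \<noteq> 0" by simp
    qed
    have "continuous_on {0..1/4} (\<lambda>v. \<beta>*(\<beta>-1)*(s0\<^sup>2-v) powr (\<beta>-2))"
      by (intro continuous_on_mult continuous_on_const continuous_on_powr continuous_on_diff continuous_on_id nz)
    then show ?thesis by (simp add: d_def)
  qed
  obtain N where N: "N \<ge> 0" "\<forall>x\<in>{0..1/4}. \<bar>d 2 x\<bar> \<le> N" using cont_bound[OF c2] by blast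
  have "\<bar>(s0\<^sup>2 - u\<^sup>2) powr (-2*\<alpha>) - s0 powr (-4*\<alpha>) - 2*\<alpha> * s0 powr (-4*\<alpha>-2) * u\<^sup>2\<bar> \<le> N * u^4"
    if u: "\<bar>u\<bar> \<le> 1/2" for u
  proof (cases "u = 0")
    case True then show ?thesis using s0 by (simp add: sq_powr)
  next
    case False
    define v where "v = u\<^sup>2"
    have v1: "0 < v" using False by (simp add: v_def)
    have "\<bar>u\<bar>^2 \<le> (1/2)^2" by (rule power_mono) (use u in auto)
    then have v2: "v \<le> 1/4" by (simp add: v_def power2_eq_square)
    note v = v1 v2
    have "\<exists>t. (if v < 0 then v < t \<and> t < 0 else 0 < t \<and> t < v) \<and>
      d 0 v = (\<Sum>m<2. (d m 0 / fact m) * (v - 0)^m) + (d 2 t / fact 2) * (v - 0)^2"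
      by (rule Taylor[of 2 d "d 0" 0 "1/4" 0 v, OF _ _ D]) (use v in auto)
    then obtain t where t: "0 < t \<and> t < v"
      "d 0 v = (\<Sum>m<2. (d m 0 / fact m) * (v - 0)^m) + (d 2 t / fact 2) * (v - 0)^2"
      using v by auto
    have e0: "d 0 0 = s0 powr (-4*\<alpha>)" using s0 by (simp add: d_def sq_powr \<beta>_def)
    have e1: "d 1 0 = 2*\<alpha> * s0 powr (-4*\<alpha>-2)"
      using s0 by (simp add: d_def sq_powr \<beta>_def algebra_simps)
    have "(s0\<^sup>2 - u\<^sup>2) powr (-2*\<alpha>) - s0 powr (-4*\<alpha>) - 2*\<alpha> * s0 powr (-4*\<alpha>-2) * u\<^sup>2 = d 2 t / 2 * v\<^sup>2"
    proof -
      have d0v: "d 0 v = (s0\<^sup>2 - u\<^sup>2) powr (-2*\<alpha>)" by (simp add: d_def v_def \<beta>_def)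
      have tay: "d 0 v = d 0 0 + d 1 0 * v + d 2 t / 2 * v\<^sup>2"
        using t(2) by (simp add: eval_nat_numeral)
      have "(s0\<^sup>2 - u\<^sup>2) powr (-2*\<alpha>) - s0 powr (-4*\<alpha>) - 2*\<alpha> * s0 powr (-4*\<alpha>-2) * u\<^sup>2
          = d 0 v - d 0 0 - d 1 0 * v" by (simp only: d0v e0 e1, simp only: v_def)
      then show ?thesis using tay by simp
    qed
    note eq = this
    have vsq: "v\<^sup>2 = u^4" by (simp add: v_def flip: power_mult)
    have Nb: "\<bar>d 2 t\<bar> \<le> N" using N t v by auto
    have "\<bar>(s0\<^sup>2 - u\<^sup>2) powr (-2*\<alpha>) - s0 powr (-4*\<alpha>) - 2*\<alpha> * s0 powr (-4*\<alpha>-2) * u\<^sup>2\<bar>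
       = \<bar>d 2 t\<bar> / 2 * u^4" unfolding eq vsq by (simp add: abs_mult)
    also have "\<dots> \<le> N / 2 * u^4" using Nb by (intro mult_right_mono divide_right_mono) auto
    also have "\<dots> \<le> N * u^4" using N by (intro mult_right_mono) auto
    finally show ?thesis .
  qed
  then show ?thesis using N by blast
qed

theorem lemma1:
  fixes s0 \<alpha> A :: real and h \<psi> :: "real \<Rightarrow> real"
  assumes s0: "s0 > 1"
    and \<alpha>: "0 < \<alpha>" "\<alpha> < 1/2"
    and h_even: "\<And>x. h (- x) = h x"
    and h_nonneg: "\<And>x. h x \<ge> 0"
    and h_bdd: "bounded (range h)"
    and h_diff: "\<And>k x. k < 4 \<Longrightarrow> (deriv ^^ k) h differentiable (at x)"
    and h_cont4: "continuous_on UNIV ((deriv ^^ 4) h)"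
    and h_deriv0: "\<And>i. i \<in> {1..4} \<Longrightarrow> (deriv ^^ i) h 0 = 0"
    and h_at0: "h 0 = 1"
    and h_pos: "\<exists>\<delta>>0. \<forall>x. \<bar>\<bar>x\<bar> - s0\<bar> < \<delta> \<longrightarrow> h x > 0"
    and h_int: "\<And>\<epsilon>. \<epsilon> > 0 \<Longrightarrow> integrable lborel (\<lambda>l. h l * (1 + \<bar>l\<bar>) powr (- \<epsilon>))"
    and \<psi>_L1: "integrable lborel \<psi>"
    and A: "A > 0"
    and supp: "\<And>l. \<bar>l\<bar> > A \<Longrightarrow> fourier \<psi> l = 0"
    and BV: "bounded_variation_on (fourier \<psi>) (- A) A"
  defines "I \<equiv> (\<lambda>\<zeta> x. LINT \<eta>|lborel. exp (\<i> * complex_of_real (\<zeta> * \<eta>)) *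
              complex_of_real ((cmod (fourier \<psi> \<eta>))\<^sup>2 * h (x * \<eta>)
                 / (s0\<^sup>2 - x\<^sup>2 * \<eta>\<^sup>2) powr (2 * \<alpha>)))"
  shows "(\<forall>\<zeta>. Cn_on 4 {- 1 / (2 * A) .. 1 / (2 * A)} (I \<zeta>)) \<and>
    (\<exists>c1>0. \<forall>\<zeta> x. \<bar>x\<bar> \<le> 1 / (2 * A) \<longrightarrow>
       cmod (I \<zeta> x
         - complex_of_real (s0 powr (- 4 * \<alpha>)) *
             (LINT \<eta>|lborel. exp (\<i> * complex_of_real (\<zeta> * \<eta>)) * complex_of_real ((cmod (fourier \<psi> \<eta>))\<^sup>2))
         - complex_of_real (2 * \<alpha> * s0 powr (- 4 * \<alpha> - 2)) *
             (LINT \<eta>|lborel. exp (\<i> * complex_of_real (\<zeta> * \<eta>)) * complex_of_real (\<eta>\<^sup>2 * (cmod (fourier \<psi> \<eta>))\<^sup>2))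
             * complex_of_real (x\<^sup>2))
       \<le> c1 * x ^ 4)"
proof -
  define T where "T = {-s0<..<s0}"
  define P where "P = (\<lambda>u. h u * (s0\<^sup>2 - u\<^sup>2) powr (-2*\<alpha>))"
  have s0p: "s0 > 0" using s0 by simp
  have hC: "Ck 4 UNIV h" by (rule h_Ck) (use h_diff h_cont4 in auto)
  have hC': "Ck 4 {-s0<..<s0} h" by (rule Ck_subset[OF hC]) auto
  have CP: "Ck 4 T P" unfolding P_def T_def
    by (rule Ck_mult[OF hC' Ck_Q[OF s0p]])
  obtain D where D0: "D 0 = P" and Dd: "\<forall>k<4. \<forall>x\<in>T. (D k has_real_derivative D (Suc k) x) (at x)"
    and Dc: "\<forall>k\<le>4. continuous_on T (D k)"
    using Ck_family[OF CP] by blast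
  define g where "g = (\<lambda>\<eta>. (cmod (fourier \<psi> \<eta>))\<^sup>2)"
  have gdef': "\<And>\<eta>. (cmod (fourier \<psi> \<eta>))\<^sup>2 = g \<eta>" by (simp add: g_def)
  have Fc: "continuous_on UNIV (fourier \<psi>)" using fourier_cont[OF \<psi>_L1] by simp
  have gc: "continuous_on UNIV g" unfolding g_def by (intro continuous_intros Fc)
  have g0: "g \<eta> = 0" if "\<eta> \<notin> {-A..A}" for \<eta>
  proof -
    have "\<bar>\<eta>\<bar> > A" using that by auto
    then show ?thesis using supp by (simp add: g_def)
  qed
  have gnn: "g \<eta> \<ge> 0" for \<eta> by (simp add: g_def)
  define R where "R = (1 + s0) / (2*A)"
  define U where "U = {-R<..<R}"
  define S where "S = {- 1 / (2 * A) .. 1 / (2 * A)}"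
  have RA: "R * A = (1 + s0) / 2" using A by (simp add: R_def field_simps)
  have SU: "S \<subseteq> U"
  proof
    fix x assume "x \<in> S"
    then have "\<bar>x\<bar> \<le> 1 / (2*A)" by (auto simp: S_def)
    also have "1 / (2*A) < R" using A s0 by (simp add: R_def divide_strict_right_mono)
    finally show "x \<in> U" by (auto simp: U_def)
  qed
  have inT: "x * \<eta> \<in> T" if "x \<in> U" "\<eta> \<in> {-A..A}" for x \<eta>
  proof -
    have eA: "\<bar>\<eta>\<bar> \<le> A" using that(2) by auto
    have "\<bar>x * \<eta>\<bar> \<le> \<bar>x\<bar> * A" unfolding abs_mult by (rule mult_left_mono[OF eA]) simp
    also have "\<dots> < R * A" using that A by (intro mult_strict_right_mono) (auto simp: U_def)
    also have "\<dots> < s0" using RA s0 by simp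
    finally show ?thesis by (auto simp: T_def)
  qed
  have Dc': "continuous_on T (D k)" if "k \<le> 4" for k using Dc that by blast
  have gcs: "continuous_on X (\<lambda>p. g (snd p))" for X :: "(real \<times> real) set"
    by (rule continuous_on_compose2[OF gc, of X snd]) (auto intro!: continuous_intros)
  define K where "K = (\<lambda>\<zeta> k x \<eta>. exp (\<i> * complex_of_real (\<zeta> * \<eta>)) * complex_of_real (g \<eta> * \<eta>^k * D k (x * \<eta>)))"
  define J where "J = (\<lambda>\<zeta> k x. integral {-A..A} (K \<zeta> k x))"
  have contK: "continuous_on (U \<times> {-A..A}) (\<lambda>(x, \<eta>). K \<zeta> k x \<eta>)" if "k \<le> 4" for \<zeta> k
  proof -
    have c1: "continuous_on (U \<times> {-A..A}) (\<lambda>p. D k (fst p * snd p))"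
      by (rule continuous_on_compose2[OF Dc'[OF that]]) (auto intro!: continuous_intros inT)
    have "continuous_on (U \<times> {-A..A}) (\<lambda>p. exp (\<i> * complex_of_real (\<zeta> * snd p)) *
        complex_of_real (g (snd p) * snd p ^ k * D k (fst p * snd p)))"
      by (intro continuous_intros c1 gcs)
    then show ?thesis by (simp add: case_prod_unfold K_def)
  qed
  have contK1: "continuous_on {-A..A} (K \<zeta> k x)" if "k \<le> 4" "x \<in> U" for \<zeta> k x
  proof -
    have "continuous_on {-A..A} (\<lambda>\<eta>. (\<lambda>(x, \<eta>). K \<zeta> k x \<eta>) (x, \<eta>))"
      by (rule continuous_on_compose2[OF contK[OF that(1)]]) (use that(2) in \<open>auto intro!: continuous_intros\<close>)
    then show ?thesis by simp
  qed
  have intK: "K \<zeta> k x integrable_on {-A..A}" if "k \<le> 4" "x \<in> U" for \<zeta> k x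
    by (rule integrable_continuous_interval[OF contK1[OF that]])
  have Kder: "((\<lambda>x. K \<zeta> k x \<eta>) has_vector_derivative K \<zeta> (Suc k) x \<eta>) (at x within U)"
    if "k < 4" "x \<in> U" "\<eta> \<in> {-A..A}" for \<zeta> k x \<eta>
  proof -
    have d1: "(D k has_real_derivative D (Suc k) (x * \<eta>)) (at (x * \<eta>))"
      using Dd that inT by blast
    have d2: "((\<lambda>x. x * \<eta>) has_real_derivative 1 * \<eta>) (at x)"
      by (intro DERIV_cmult_right DERIV_ident)
    have d3: "((\<lambda>x. D k (x * \<eta>)) has_real_derivative D (Suc k) (x * \<eta>) * (1 * \<eta>)) (at x)"
      by (rule DERIV_chain2[OF d1 d2])
    have d4: "((\<lambda>x. g \<eta> * \<eta>^k * D k (x * \<eta>)) has_real_derivative (g \<eta> * \<eta>^k) * (D (Suc k) (x * \<eta>) * (1 * \<eta>))) (at x)"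
      by (rule DERIV_cmult[OF d3])
    have eqv: "(g \<eta> * \<eta>^k) * (D (Suc k) (x * \<eta>) * (1 * \<eta>)) = g \<eta> * \<eta>^(Suc k) * D (Suc k) (x * \<eta>)"
      by (simp add: mult_ac)
    have d5: "((\<lambda>x. exp (\<i> * complex_of_real (\<zeta> * \<eta>)) * complex_of_real (g \<eta> * \<eta>^k * D k (x * \<eta>)))
       has_vector_derivative exp (\<i> * complex_of_real (\<zeta> * \<eta>)) * complex_of_real (g \<eta> * \<eta>^(Suc k) * D (Suc k) (x * \<eta>))) (at x)"
      using has_vector_derivative_mult_right[OF has_vector_derivative_of_real[OF d4]] unfolding eqv .
    show ?thesis unfolding K_def by (rule has_vector_derivative_at_within[OF d5])
  qed
  have Jder: "(J \<zeta> k has_vector_derivative J \<zeta> (Suc k) x) (at x within U)" if "k < 4" "x \<in> U" for \<zeta> k x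
    unfolding J_def
  proof (rule leibniz_rule_vector_derivative[where a="-A" and b=A, unfolded cbox_interval])
    show "\<And>x t. x \<in> U \<Longrightarrow> t \<in> {- A..A} \<Longrightarrow> ((\<lambda>x. K \<zeta> k x t) has_vector_derivative K \<zeta> (Suc k) x t) (at x within U)"
      using Kder that(1) by blast
    show "\<And>x. x \<in> U \<Longrightarrow> K \<zeta> k x integrable_on {- A..A}" using intK that(1) by simp
    show "continuous_on (U \<times> {- A..A}) (\<lambda>(x, t). K \<zeta> (Suc k) x t)" using contK that(1) by simp
    show "x \<in> U" by fact
    show "convex U" by (simp add: U_def)
  qed
  have Jcont: "continuous_on U (J \<zeta> 4)" for \<zeta>
    unfolding J_def using integral_continuous_on_param[where a="-A" and b=A, unfolded cbox_interval, OF contK[of 4 \<zeta>]]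
    by simp
  have Ieq: "I \<zeta> x = (LINT \<eta>|lborel. K \<zeta> 0 x \<eta>)" for \<zeta> x
  proof -
    have "exp (\<i> * complex_of_real (\<zeta> * \<eta>)) * complex_of_real ((cmod (fourier \<psi> \<eta>))\<^sup>2 * h (x * \<eta>)
                 / (s0\<^sup>2 - x\<^sup>2 * \<eta>\<^sup>2) powr (2 * \<alpha>)) = K \<zeta> 0 x \<eta>" for \<eta>
    proof -
      have "(s0\<^sup>2 - (x * \<eta>)\<^sup>2) powr (-2*\<alpha>) = 1 / (s0\<^sup>2 - x\<^sup>2 * \<eta>\<^sup>2) powr (2 * \<alpha>)"
        by (simp add: power_mult_distrib powr_minus_divide)
      then show ?thesis by (simp add: K_def D0 P_def g_def)
    qed
    then show ?thesis unfolding I_def by simp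
  qed
  have IJ: "I \<zeta> x = J \<zeta> 0 x" if "x \<in> U" for \<zeta> x
  proof -
    have "(LINT \<eta>|lborel. K \<zeta> 0 x \<eta>) = integral {-A..A} (K \<zeta> 0 x)"
      by (rule lint_cbox(2)[OF contK1[OF _ that]]) (auto simp: K_def g0)
    then show ?thesis using Ieq by (simp add: J_def)
  qed
  have part1: "\<forall>\<zeta>. Cn_on 4 {- 1 / (2 * A) .. 1 / (2 * A)} (I \<zeta>)"
  proof
    fix \<zeta>
    show "Cn_on 4 {- 1 / (2 * A) .. 1 / (2 * A)} (I \<zeta>)"
      unfolding Cn_on_def S_def[symmetric]
    proof (intro exI[of _ "J \<zeta>"] conjI ballI allI impI)
      show "J \<zeta> 0 x = I \<zeta> x" if "x \<in> S" for x using IJ SU that by auto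
      show "(J \<zeta> k has_vector_derivative J \<zeta> (Suc k) x) (at x within S)" if "k < 4" "x \<in> S" for k x
        using has_vector_derivative_within_subset[OF Jder[OF that(1)] SU] that SU by auto
      show "continuous_on S (J \<zeta> 4)" using continuous_on_subset[OF Jcont SU] .
    qed
  qed
  define P0 where "P0 = s0 powr (- 4 * \<alpha>)"
  define c2 where "c2 = 2 * \<alpha> * s0 powr (- 4 * \<alpha> - 2)"
  obtain M where M: "M \<ge> 0" "\<forall>u. \<bar>u\<bar> \<le> 1/2 \<longrightarrow> \<bar>h u - 1\<bar> \<le> M * u^4"
    using h_taylor[OF h_diff h_cont4 h_deriv0 h_at0] by blast
  obtain N where N: "N \<ge> 0" "\<forall>u. \<bar>u\<bar> \<le> 1/2 \<longrightarrow>
     \<bar>(s0\<^sup>2 - u\<^sup>2) powr (-2*\<alpha>) - s0 powr (-4*\<alpha>) - 2*\<alpha> * s0 powr (-4*\<alpha>-2) * u\<^sup>2\<bar> \<le> N * u^4"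
    using Q_taylor[OF s0, of \<alpha>] by blast
  have half: "{-1/2..1/2} \<subseteq> T" using s0 by (auto simp: T_def)
  have Qc: "continuous_on {-1/2..1/2} (\<lambda>u. (s0\<^sup>2 - u\<^sup>2) powr (-2*\<alpha>))"
    using continuous_on_subset[OF Ck_cont[OF Ck_Q[OF s0p, of 0 "-2*\<alpha>"]]] half by (simp add: T_def)
  obtain B where B: "B \<ge> 0" "\<forall>u\<in>{-1/2..1/2}. \<bar>(s0\<^sup>2 - u\<^sup>2) powr (-2*\<alpha>)\<bar> \<le> B"
    using cont_bound[OF Qc] by blast
  define C where "C = M * B + N"
  have C0: "C \<ge> 0" using M B N by (simp add: C_def)
  have Pb: "\<bar>P u - P0 - c2 * u\<^sup>2\<bar> \<le> C * u^4" if u: "\<bar>u\<bar> \<le> 1/2" for u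
  proof -
    define q where "q = (s0\<^sup>2 - u\<^sup>2) powr (-2*\<alpha>)"
    have "P u - P0 - c2 * u\<^sup>2 = (h u - 1) * q + (q - P0 - c2 * u\<^sup>2)"
      by (simp add: P_def q_def algebra_simps)
    then have "\<bar>P u - P0 - c2 * u\<^sup>2\<bar> \<le> \<bar>h u - 1\<bar> * \<bar>q\<bar> + \<bar>q - P0 - c2 * u\<^sup>2\<bar>"
      by (simp add: abs_mult[symmetric] abs_triangle_ineq)
    also have "\<dots> \<le> (M * u^4) * B + N * u^4"
    proof (rule add_mono)
      have uI: "u \<in> {-1/2..1/2}" using u by auto
      have qB: "\<bar>q\<bar> \<le> B" using B(2) uI unfolding q_def by blast
      have hM: "\<bar>h u - 1\<bar> \<le> M * u^4" using M(2) u by blast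
      show "\<bar>h u - 1\<bar> * \<bar>q\<bar> \<le> M * u ^ 4 * B"
        by (rule mult_mono[OF hM qB]) (use M in auto)
      show "\<bar>q - P0 - c2 * u\<^sup>2\<bar> \<le> N * u ^ 4"
        using N u by (simp add: q_def P0_def c2_def)
    qed
    also have "\<dots> = C * u^4" by (simp add: C_def algebra_simps)
    finally show ?thesis .
  qed
  define G where "G = integral {-A..A} (\<lambda>\<eta>. g \<eta> * \<eta>^4)"
  have gcA: "continuous_on {-A..A} g" using continuous_on_subset[OF gc] by auto
  have G0: "G \<ge> 0" unfolding G_def
    by (rule integral_nonneg) (auto intro!: integrable_continuous_interval continuous_intros gcA simp: gnn)
  define c1 where "c1 = C * G + 1"
  have part2: "\<forall>\<zeta> x. \<bar>x\<bar> \<le> 1 / (2 * A) \<longrightarrow>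
       cmod (I \<zeta> x - complex_of_real P0 *
             (LINT \<eta>|lborel. exp (\<i> * complex_of_real (\<zeta> * \<eta>)) * complex_of_real (g \<eta>))
         - complex_of_real c2 *
             (LINT \<eta>|lborel. exp (\<i> * complex_of_real (\<zeta> * \<eta>)) * complex_of_real (\<eta>\<^sup>2 * g \<eta>))
             * complex_of_real (x\<^sup>2))
       \<le> c1 * x ^ 4"
  proof (intro allI impI)
    fix \<zeta> x :: real assume x: "\<bar>x\<bar> \<le> 1 / (2 * A)"
    have "x \<in> S" using x unfolding S_def by (auto simp: abs_le_iff)
    then have xU: "x \<in> U" using SU by blast
    define e where "e = (\<lambda>\<eta>. exp (\<i> * complex_of_real (\<zeta> * \<eta>)))"
    have ec: "continuous_on X e" for X unfolding e_def by (intro continuous_intros)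
    define f2 where "f2 = (\<lambda>\<eta>. e \<eta> * complex_of_real (g \<eta>))"
    define f3 where "f3 = (\<lambda>\<eta>. e \<eta> * complex_of_real (\<eta>\<^sup>2 * g \<eta>))"
    have cf2: "continuous_on {-A..A} f2" unfolding f2_def by (intro continuous_intros ec gcA)
    have cf3: "continuous_on {-A..A} f3" unfolding f3_def by (intro continuous_intros ec gcA)
    have L2: "(LINT \<eta>|lborel. f2 \<eta>) = integral {-A..A} f2"
      by (rule lint_cbox(2)[OF cf2]) (simp add: f2_def g0)
    have L3: "(LINT \<eta>|lborel. f3 \<eta>) = integral {-A..A} f3"
      by (rule lint_cbox(2)[OF cf3]) (simp add: f3_def g0)
    have i1: "K \<zeta> 0 x integrable_on {-A..A}" by (rule intK[OF _ xU]) simp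
    have i2: "f2 integrable_on {-A..A}" by (rule integrable_continuous_interval[OF cf2])
    have i3: "f3 integrable_on {-A..A}" by (rule integrable_continuous_interval[OF cf3])
    define \<Phi> where "\<Phi> = (\<lambda>\<eta>. K \<zeta> 0 x \<eta> - complex_of_real P0 * f2 \<eta> - complex_of_real c2 * f3 \<eta> * complex_of_real (x\<^sup>2))"
    have hi: "(\<Phi> has_integral (J \<zeta> 0 x - complex_of_real P0 * integral {-A..A} f2
        - complex_of_real c2 * integral {-A..A} f3 * complex_of_real (x\<^sup>2))) {-A..A}"
      unfolding \<Phi>_def J_def
      by (intro has_integral_diff has_integral_mult_right has_integral_mult_left integrable_integral i1 i2 i3)
    have Phi_eq: "\<Phi> \<eta> = e \<eta> * complex_of_real (g \<eta> * (P (x * \<eta>) - P0 - c2 * (x * \<eta>)\<^sup>2))" for \<eta>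
      by (simp add: \<Phi>_def K_def D0 f2_def f3_def e_def algebra_simps power_mult_distrib)
    have nb: "norm (\<Phi> \<eta>) \<le> (C * x^4) * (g \<eta> * \<eta>^4)" if "\<eta> \<in> {-A..A}" for \<eta>
    proof -
      have eA: "\<bar>\<eta>\<bar> \<le> A" using that by auto
      have "\<bar>x * \<eta>\<bar> \<le> 1 / (2 * A) * A" unfolding abs_mult
        by (rule mult_mono[OF x eA]) (use A in auto)
      then have xe: "\<bar>x * \<eta>\<bar> \<le> 1/2" using A by simp
      have ne: "norm (e \<eta>) = 1" unfolding e_def by (rule norm_exp_i_times)
      have "norm (\<Phi> \<eta>) = g \<eta> * \<bar>P (x * \<eta>) - P0 - c2 * (x * \<eta>)\<^sup>2\<bar>"
        unfolding Phi_eq norm_mult ne norm_of_real abs_mult using gnn[of \<eta>] by simp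
      also have "\<dots> \<le> g \<eta> * (C * (x * \<eta>)^4)"
        by (rule mult_left_mono[OF Pb[OF xe] gnn])
      also have "\<dots> = (C * x^4) * (g \<eta> * \<eta>^4)" by (simp add: power_mult_distrib algebra_simps)
      finally show ?thesis .
    qed
    have "norm (integral {-A..A} \<Phi>) \<le> integral {-A..A} (\<lambda>\<eta>. (C * x^4) * (g \<eta> * \<eta>^4))"
      by (rule integral_norm_bound_integral[OF has_integral_integrable[OF hi]])
        (auto intro!: integrable_continuous_interval continuous_intros gcA nb)
    also have "\<dots> = C * x^4 * G" by (simp add: G_def)
    also have "\<dots> \<le> c1 * x^4" using C0 G0 by (simp add: c1_def algebra_simps)
    finally have fin: "norm (integral {-A..A} \<Phi>) \<le> c1 * x^4" .
    have "integral {-A..A} \<Phi> = I \<zeta> x - complex_of_real P0 * (LINT \<eta>|lborel. f2 \<eta>)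
        - complex_of_real c2 * (LINT \<eta>|lborel. f3 \<eta>) * complex_of_real (x\<^sup>2)"
      using integral_unique[OF hi] IJ[OF xU] L2 L3 by simp
    then show "cmod (I \<zeta> x - complex_of_real P0 *
             (LINT \<eta>|lborel. exp (\<i> * complex_of_real (\<zeta> * \<eta>)) * complex_of_real (g \<eta>))
         - complex_of_real c2 *
             (LINT \<eta>|lborel. exp (\<i> * complex_of_real (\<zeta> * \<eta>)) * complex_of_real (\<eta>\<^sup>2 * g \<eta>))
             * complex_of_real (x\<^sup>2))
       \<le> c1 * x ^ 4"
      using fin by (simp add: f2_def f3_def e_def)
  qed
  have c1p: "c1 > 0" using C0 G0 by (simp add: c1_def add_nonneg_pos)
  show ?thesis
    unfolding gdef' using part1 part2 c1p unfolding P0_def c2_def by blast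
qed

end
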